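(* Let $n\in\mathbb N$ and let $\hat A\in\mathcal A^n$ with $\langle n|\hat A|n\rangle\neq0$. Then there exists $t_0>0$ such that $\mathcal V^{\mathrm{norm}}_t[\hat A]\in\mathcal D^n$ for all $t\ge t_0$.
   Context: Let $\mathcal H=L^2(\mathbb R)$ with annihilation operator $\hat a$, $\hat n=\hat a^\dagger\hat a$ and Fock basis $\{|k\rangle\}$. A quasi-state is a Hermitian trace-class operator of unit trace; a state is a positive semi-definite quasi-state. With $\hat P_n=\sum_{k=0}^n|k\rangle\langle k|$, $\mathcal A^n$ is the set of quasi-states $\hat A$ with $\hat P_n\hat A\hat P_n=\hat A$, and $\mathcal D^n$ the set of states in $\mathcal A^n$. For $t>0$ and such $\hat A$, the Vertigo map is $\mathcal V_t[\hat A]=\sum_{k\ge0}\frac{(t-1)^k}{k!}t^{\hat n/2}\hat a^k\hat A\hat a^{\dagger k}t^{\hat n/2}$ (finite sum), equivalently characterized on Wigner functions $W_{\hat A}(\alpha)=\frac2\pi\mathrm{Tr}[\hat A\hat D(\alpha)(-1)^{\hat n}\hat D(\alpha)^\dagger]$ (with $\hat D(\alpha)=\exp(\alpha\hat a^\dagger-\alpha^*\hat a)$) by $W_{\mathcal V_t[\hat A]}(\alpha)=W_{\hat A}(\sqrt t\alpha)e^{2(t-1)|\alpha|^2}$; and $\mathcal V^{\mathrm{norm}}_t[\hat A]=\mathcal V_t[\hat A]/\mathrm{Tr}\,\mathcal V_t[\hat A]$ whenever this trace is non-zero. *)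

theory Defs
  imports Complex_Main "Jordan_Normal_Form.Matrix"
begin

text \<open>Operators A with P_n A P_n = A are identified with their (n+1) x (n+1)
  block of Fock-basis matrix elements: entry (p,q) is the matrix element of A
  between Fock states p and q, for p,q = 0..n.\<close>

definition fock_dim :: "nat \<Rightarrow> nat" where
  "fock_dim n = Suc n"

definition adj :: "complex mat \<Rightarrow> complex mat" where
  "adj A = mat (dim_col A) (dim_row A) (\<lambda>(i,j). cnj (A $$ (j,i)))"

definition mtrace :: "complex mat \<Rightarrow> complex" where
  "mtrace A = (\<Sum>i<dim_row A. A $$ (i,i))"

text \<open>Annihilation operator compressed to span of Fock states 0..n:
  a |k> = sqrt k |k-1>, so the (k-1,k) entry is sqrt k.  Since a lowers the
  photon number, a P_n = P_n a P_n.\<close>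
definition ann :: "nat \<Rightarrow> complex mat" where
  "ann n = mat (fock_dim n) (fock_dim n)
     (\<lambda>(i,j). if j = Suc i then complex_of_real (sqrt (real j)) else 0)"

text \<open>t^(n_hat/2) restricted to Fock states 0..n (diagonal).\<close>
definition tnum :: "nat \<Rightarrow> real \<Rightarrow> complex mat" where
  "tnum n t = mat (fock_dim n) (fock_dim n)
     (\<lambda>(i,j). if i = j then complex_of_real (t powr (real i / 2)) else 0)"

definition quasi_state_n :: "nat \<Rightarrow> complex mat \<Rightarrow> bool" where
  "quasi_state_n n A \<longleftrightarrow> A \<in> carrier_mat (fock_dim n) (fock_dim n)
      \<and> adj A = A \<and> mtrace A = 1"

definition psd :: "complex mat \<Rightarrow> bool" where
  "psd A \<longleftrightarrow> (\<forall>v \<in> carrier_vec (dim_col A).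
      (let z = map_vec cnj v \<bullet> (A *\<^sub>v v) in Im z = 0 \<and> 0 \<le> Re z))"

definition state_n :: "nat \<Rightarrow> complex mat \<Rightarrow> bool" where
  "state_n n A \<longleftrightarrow> quasi_state_n n A \<and> psd A"

text \<open>Vertigo map: sum over k of (t-1)^k/k! t^(n/2) a^k A a^dag^k t^(n/2).
  The terms with k > n vanish on A^n, so the sum is taken over k = 0..n.\<close>
definition vertigo :: "nat \<Rightarrow> real \<Rightarrow> complex mat \<Rightarrow> complex mat" where
  "vertigo n t A = mat (fock_dim n) (fock_dim n) (\<lambda>ij.
     \<Sum>k\<le>n. complex_of_real ((t - 1) ^ k / fact k) *
       ((tnum n t * (ann n ^\<^sub>m k) * A * (adj (ann n) ^\<^sub>m k) * tnum n t) $$ ij))"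

definition vertigo_norm :: "nat \<Rightarrow> real \<Rightarrow> complex mat \<Rightarrow> complex mat" where
  "vertigo_norm n t A = (1 / mtrace (vertigo n t A)) \<cdot>\<^sub>m vertigo n t A"

end

theory Submission
  imports Defs
begin


lemma mult_entry:
  assumes "A \<in> carrier_mat m l" "B \<in> carrier_mat l r" "i < m" "j < r"
  shows "(A * B) $$ (i,j) = (\<Sum>x<l. A $$ (i,x) * B $$ (x,j))"
  using assms by (auto simp: scalar_prod_def lessThan_atLeast0 intro!: sum.cong)

lemma ann_carrier[simp]: "ann n \<in> carrier_mat (Suc n) (Suc n)"
  by (simp add: ann_def fock_dim_def)
lemma adj_carrier[simp]: "A \<in> carrier_mat a b \<Longrightarrow> adj A \<in> carrier_mat b a"
  by (simp add: adj_def)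
lemma tnum_carrier[simp]: "tnum n t \<in> carrier_mat (Suc n) (Suc n)"
  by (simp add: tnum_def fock_dim_def)

lemma sum_delta_nat: "(\<Sum>x<(N::nat). if x = a then f x else (0::'a::comm_monoid_add)) = (if a < N then f a else 0)"
proof -
  have "(\<Sum>x<N. if x = a then f x else (0::'a)) = (\<Sum>x<N. if x = a then f a else 0)"
    by (rule sum.cong) auto
  also have "\<dots> = (if a < N then f a else 0)" by (simp add: sum.delta)
  finally show ?thesis .
qed

lemma ann_entry: "i < Suc n \<Longrightarrow> j < Suc n \<Longrightarrow> ann n $$ (i,j) = (if j = Suc i then complex_of_real (sqrt (real j)) else 0)"
  by (simp add: ann_def fock_dim_def)
lemma adj_ann_entry: "i < Suc n \<Longrightarrow> j < Suc n \<Longrightarrow> adj (ann n) $$ (i,j) = (if i = Suc j then complex_of_real (sqrt (real i)) else 0)"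
  by (simp add: ann_def adj_def fock_dim_def)

lemma ann_pow:
  assumes "i < Suc n" "j < Suc n"
  shows "(ann n ^\<^sub>m k) $$ (i,j) = (if j = i + k then complex_of_real (sqrt (fact j / fact i)) else 0)"
  using assms
proof (induction k arbitrary: i j)
  case 0
  then show ?case by (simp add: ann_def fock_dim_def)
next
  case (Suc k)
  have c: "ann n ^\<^sub>m k \<in> carrier_mat (Suc n) (Suc n)" by (metis ann_carrier pow_carrier_mat)
  have "(ann n ^\<^sub>m Suc k) $$ (i,j) = (\<Sum>x<Suc n. (ann n ^\<^sub>m k) $$ (i,x) * ann n $$ (x,j))"
    using Suc.prems c by (simp add: mult_entry[OF c ann_carrier])
  also have "\<dots> = (\<Sum>x<Suc n. if x = i + k then (if j = Suc x then complex_of_real (sqrt (fact x / fact i)) * complex_of_real (sqrt (real j)) else 0) else 0)"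
    using Suc.prems by (intro sum.cong) (auto simp: Suc.IH ann_entry)
  also have "\<dots> = (if j = i + Suc k then complex_of_real (sqrt (fact j / fact i)) else 0)"
  proof -
    { assume j: "j = Suc (i+k)"
      have "sqrt (fact (i+k) / fact i) * sqrt (real j) = sqrt (fact j / fact i)"
        by (simp add: j real_sqrt_mult[symmetric] algebra_simps)
      then have "complex_of_real (sqrt (fact (i+k) / fact i)) * complex_of_real (sqrt (real j)) = complex_of_real (sqrt (fact j / fact i))"
        by (metis of_real_mult) }
    then show ?thesis using Suc.prems by (auto simp: sum_delta_nat)
  qed
  finally show ?case .
qed

lemma adj_ann_pow:
  assumes "i < Suc n" "j < Suc n"
  shows "(adj (ann n) ^\<^sub>m k) $$ (i,j) = (if i = j + k then complex_of_real (sqrt (fact i / fact j)) else 0)"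
  using assms
proof (induction k arbitrary: i j)
  case 0
  then show ?case by (simp add: ann_def adj_def fock_dim_def)
next
  case (Suc k)
  have c: "adj (ann n) ^\<^sub>m k \<in> carrier_mat (Suc n) (Suc n)" by (metis ann_carrier adj_carrier pow_carrier_mat)
  have c2: "adj (ann n) \<in> carrier_mat (Suc n) (Suc n)" by simp
  have "(adj (ann n) ^\<^sub>m Suc k) $$ (i,j) = (\<Sum>x<Suc n. (adj (ann n) ^\<^sub>m k) $$ (i,x) * adj (ann n) $$ (x,j))"
    using Suc.prems c by (simp add: mult_entry[OF c c2])
  also have "\<dots> = (\<Sum>x<Suc n. if x = Suc j then (if i = x + k then complex_of_real (sqrt (fact i / fact x)) * complex_of_real (sqrt (real x)) else 0) else 0)"
    using Suc.prems by (intro sum.cong) (auto simp: Suc.IH adj_ann_entry)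
  also have "\<dots> = (if i = j + Suc k then complex_of_real (sqrt (fact i / fact j)) else 0)"
  proof -
    { assume j: "i = Suc j + k"
      have "fact i / fact (Suc j) * real (Suc j) = (fact i / fact j :: real)"
        unfolding fact_Suc by (simp add: field_simps del: of_nat_Suc)
      then have "sqrt (fact i / fact (Suc j)) * sqrt (real (Suc j)) = sqrt (fact i / fact j)"
        by (simp add: real_sqrt_mult[symmetric])
      then have "complex_of_real (sqrt (fact i / fact (Suc j))) * complex_of_real (sqrt (real (Suc j))) = complex_of_real (sqrt (fact i / fact j))"
        by (metis of_real_mult) }
    then show ?thesis using Suc.prems by (auto simp: sum_delta_nat)
  qed
  finally show ?case .
qed

lemma tnum_entry: "i < Suc n \<Longrightarrow> j < Suc n \<Longrightarrow> tnum n t $$ (i,j) = (if i = j then complex_of_real (t powr (real i / 2)) else 0)"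
  by (simp add: tnum_def fock_dim_def)

definition cf :: "nat \<Rightarrow> nat \<Rightarrow> complex" where
  "cf i k = complex_of_real (sqrt (fact (i+k) / fact i))"
definition tau :: "real \<Rightarrow> nat \<Rightarrow> complex" where
  "tau t i = complex_of_real (t powr (real i / 2))"

lemma vprod_entry:
  assumes A: "A \<in> carrier_mat (Suc n) (Suc n)" and ij: "i < Suc n" "j < Suc n"
  shows "(tnum n t * (ann n ^\<^sub>m k) * A * (adj (ann n) ^\<^sub>m k) * tnum n t) $$ (i,j) =
    (if i + k < Suc n \<and> j + k < Suc n then tau t i * cf i k * A $$ (i+k, j+k) * cf j k * tau t j else 0)"
proof -
  let ?N = "Suc n"
  have ca: "ann n ^\<^sub>m k \<in> carrier_mat ?N ?N" by (metis ann_carrier pow_carrier_mat)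
  have cd: "adj (ann n) ^\<^sub>m k \<in> carrier_mat ?N ?N" by (metis ann_carrier adj_carrier pow_carrier_mat)
  have ct: "tnum n t \<in> carrier_mat ?N ?N" by simp
  define X1 where "X1 = tnum n t * (ann n ^\<^sub>m k)"
  define X2 where "X2 = X1 * A"
  define X3 where "X3 = X2 * (adj (ann n) ^\<^sub>m k)"
  have c1: "X1 \<in> carrier_mat ?N ?N" unfolding X1_def using ca ct by (metis mult_carrier_mat)
  have c2: "X2 \<in> carrier_mat ?N ?N" unfolding X2_def using c1 A by (metis mult_carrier_mat)
  have c3: "X3 \<in> carrier_mat ?N ?N" unfolding X3_def using c2 cd by (metis mult_carrier_mat)
  have e1: "X1 $$ (a,b) = (if b = a + k then tau t a * cf a k else 0)" if "a < ?N" "b < ?N" for a b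
  proof -
    have "X1 $$ (a,b) = (\<Sum>x<?N. if x = a then tau t a * (ann n ^\<^sub>m k) $$ (a,b) else 0)"
      unfolding X1_def using that by (simp only: mult_entry[OF ct ca]) (rule sum.cong, auto simp: tnum_entry tau_def)
    also have "\<dots> = tau t a * (ann n ^\<^sub>m k) $$ (a,b)" using that by (simp add: sum_delta_nat)
    finally show ?thesis using that by (simp add: ann_pow cf_def)
  qed
  have e2: "X2 $$ (a,b) = (if a + k < ?N then tau t a * cf a k * A $$ (a+k, b) else 0)" if "a < ?N" "b < ?N" for a b
  proof -
    have "X2 $$ (a,b) = (\<Sum>x<?N. if x = a + k then tau t a * cf a k * A $$ (x,b) else 0)"
      unfolding X2_def using that by (simp only: mult_entry[OF c1 A]) (rule sum.cong, auto simp: e1)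
    also have "\<dots> = (if a + k < ?N then tau t a * cf a k * A $$ (a+k, b) else 0)" by (simp add: sum_delta_nat)
    finally show ?thesis .
  qed
  have e3: "X3 $$ (a,b) = (if b + k < ?N then X2 $$ (a, b+k) * cf b k else 0)" if "a < ?N" "b < ?N" for a b
  proof -
    have "X3 $$ (a,b) = (\<Sum>x<?N. if x = b + k then X2 $$ (a,x) * cf b k else 0)"
      unfolding X3_def using that by (simp only: mult_entry[OF c2 cd]) (rule sum.cong, auto simp: adj_ann_pow cf_def)
    also have "\<dots> = (if b + k < ?N then X2 $$ (a, b+k) * cf b k else 0)" by (simp add: sum_delta_nat)
    finally show ?thesis .
  qed
  have "(X3 * tnum n t) $$ (i,j) = (\<Sum>x<?N. if x = j then X3 $$ (i,x) * tau t j else 0)"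
    using ij by (simp only: mult_entry[OF c3 ct]) (rule sum.cong, auto simp: tnum_entry tau_def)
  also have "\<dots> = X3 $$ (i,j) * tau t j" using ij by (simp add: sum_delta_nat)
  finally have "(X3 * tnum n t) $$ (i,j) = X3 $$ (i,j) * tau t j" .
  moreover have "tnum n t * (ann n ^\<^sub>m k) * A * (adj (ann n) ^\<^sub>m k) * tnum n t = X3 * tnum n t"
    unfolding X3_def X2_def X1_def ..
  ultimately show ?thesis using ij by (simp add: e3 e2)
qed



lemma vertigo_carrier[simp]: "vertigo n t A \<in> carrier_mat (Suc n) (Suc n)"
  by (simp add: vertigo_def fock_dim_def)

lemma vertigo_entry:
  assumes A: "A \<in> carrier_mat (Suc n) (Suc n)" and pq: "p < Suc n" "q < Suc n"
  shows "vertigo n t A $$ (p,q) = (\<Sum>k\<le>n. complex_of_real ((t - 1) ^ k / fact k) *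
     (if p + k < Suc n \<and> q + k < Suc n then tau t p * cf p k * A $$ (p+k, q+k) * cf q k * tau t q else 0))"
proof -
  have fd: "p < fock_dim n" "q < fock_dim n" using pq by (auto simp: fock_dim_def)
  show ?thesis unfolding vertigo_def index_mat(1)[OF fd] split
    by (intro sum.cong refl arg_cong2[where f="(*)"] vprod_entry[OF A pq])
qed

lemma herm_entry:
  assumes "A \<in> carrier_mat N N" "adj A = A" "i < N" "j < N"
  shows "A $$ (j,i) = cnj (A $$ (i,j))"
proof -
  have "A $$ (j,i) = adj A $$ (j,i)" using assms by simp
  also have "\<dots> = cnj (A $$ (i,j))" using assms(1,3,4) by (simp add: adj_def)
  finally show ?thesis .
qed

lemma vertigo_herm:
  assumes A: "A \<in> carrier_mat (Suc n) (Suc n)" "adj A = A" and pq: "p < Suc n" "q < Suc n"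
  shows "vertigo n t A $$ (q,p) = cnj (vertigo n t A $$ (p,q))"
proof -
  have hA: "A $$ (q+k, p+k) = cnj (A $$ (p+k, q+k))" if "p + k < Suc n" "q + k < Suc n" for k
    using herm_entry[OF A that] .
  show ?thesis unfolding vertigo_entry[OF A(1) pq] vertigo_entry[OF A(1) pq(2) pq(1)] cnj_sum
    by (intro sum.cong refl) (auto simp: tau_def cf_def hA)
qed

lemma cnj_sum_swap: fixes M :: "nat \<Rightarrow> nat \<Rightarrow> complex"
  shows "(\<Sum>i<N. \<Sum>j<N. f i j) = (\<Sum>j<N. \<Sum>i<N. f i j)"
  by (rule sum.swap)

lemma re_bound: "Re (cnj a * m * b) \<ge> - (cmod m * ((cmod a)^2 + (cmod b)^2) / 2)"
proof -
  have "- Re (cnj a * m * b) \<le> cmod (cnj a * m * b)" using abs_Re_le_cmod[of "cnj a * m * b"] by linarith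
  also have "\<dots> = cmod m * (cmod a * cmod b)" by (simp add: norm_mult)
  also have "\<dots> \<le> cmod m * (((cmod a)^2 + (cmod b)^2) / 2)"
  proof (rule mult_left_mono)
    have "0 \<le> (cmod a - cmod b)^2" by simp
    then show "cmod a * cmod b \<le> ((cmod a)^2 + (cmod b)^2) / 2"
      by (simp add: power2_diff field_simps)
  qed simp
  finally show ?thesis by simp
qed

lemma dd_psd:
  assumes M: "M \<in> carrier_mat N N"
    and h: "\<And>i j. i < N \<Longrightarrow> j < N \<Longrightarrow> M $$ (j,i) = cnj (M $$ (i,j))"
    and dd: "\<And>i. i < N \<Longrightarrow> (\<Sum>j\<in>{..<N}-{i}. cmod (M $$ (i,j))) \<le> Re (M $$ (i,i))"
  shows "psd M"
  unfolding psd_def Let_def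
proof (intro ballI conjI)
  fix v :: "complex vec" assume v: "v \<in> carrier_vec (dim_col M)"
  then have dv: "dim_vec v = N" using M by auto
  define z where "z = map_vec cnj v \<bullet> (M *\<^sub>v v)"
  have z: "z = (\<Sum>i<N. \<Sum>j<N. cnj (v $ i) * M $$ (i,j) * v $ j)"
  proof -
    have mv: "(M *\<^sub>v v) $ i = (\<Sum>j<N. M $$ (i,j) * v $ j)" if "i < N" for i
      using that M dv by (auto simp: scalar_prod_def lessThan_atLeast0 intro!: sum.cong)
    have "z = (\<Sum>i<N. cnj (v $ i) * (M *\<^sub>v v) $ i)"
      unfolding z_def scalar_prod_def using M dv by (auto simp: lessThan_atLeast0 intro!: sum.cong)
    also have "\<dots> = (\<Sum>i<N. \<Sum>j<N. cnj (v $ i) * M $$ (i,j) * v $ j)"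
      by (intro sum.cong refl) (simp add: mv sum_distrib_left mult.assoc)
    finally show ?thesis .
  qed
  have "cnj z = (\<Sum>i<N. \<Sum>j<N. v $ i * cnj (M $$ (i,j)) * cnj (v $ j))" unfolding z by simp
  also have "\<dots> = (\<Sum>i<N. \<Sum>j<N. cnj (v $ j) * M $$ (j,i) * v $ i)"
    by (intro sum.cong refl) (simp add: h[symmetric])
  also have "\<dots> = z" unfolding z by (rule sum.swap)
  finally have "cnj z = z" .
  then have "Im (cnj z) = Im z" by simp
  then show "Im z = 0" by simp
  define f where "f i j = (if i = j then (cmod (v $ i))^2 * Re (M $$ (i,i)) else - (cmod (M $$ (i,j)) * ((cmod (v $ i))^2 + (cmod (v $ j))^2) / 2))" for i j
  have "Re z = (\<Sum>i<N. \<Sum>j<N. Re (cnj (v $ i) * M $$ (i,j) * v $ j))" unfolding z by (simp add: Re_sum)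
  also have "\<dots> \<ge> (\<Sum>i<N. \<Sum>j<N. f i j)"
  proof (intro sum_mono)
    fix i j
    show "f i j \<le> Re (cnj (v $ i) * M $$ (i,j) * v $ j)"
    proof (cases "i = j")
      case True
      have "cnj (v $ i) * M $$ (i,i) * v $ i = M $$ (i,i) * of_real ((cmod (v $ i))^2)"
        using complex_norm_square[of "v $ i"] by (simp only:) (simp add: algebra_simps)
      moreover have "Re (M $$ (i,i) * of_real r) = r * Re (M $$ (i,i))" for r
        by simp
      ultimately have "Re (cnj (v $ i) * M $$ (i,i) * v $ i) = (cmod (v $ i))^2 * Re (M $$ (i,i))" by (simp only:)
      then show ?thesis using True by (simp add: f_def)
    next
      case False then show ?thesis using re_bound by (simp add: f_def)
    qed
  qed
  finally have 1: "(\<Sum>i<N. \<Sum>j<N. f i j) \<le> Re z" .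
  define g where "g i j = (if i = j then 0 else cmod (M $$ (i,j)) * (cmod (v $ i))^2)" for i j
  define g' where "g' i j = (if i = j then 0 else cmod (M $$ (i,j)) * (cmod (v $ j))^2)" for i j
  have fe: "f i j = (if i = j then (cmod (v $ i))^2 * Re (M $$ (i,i)) else 0) - g i j / 2 - g' i j / 2" for i j
    by (simp add: f_def g_def g'_def field_simps)
  have hc: "cmod (M $$ (j,i)) = cmod (M $$ (i,j))" if "i < N" "j < N" for i j
    using h[OF that] by simp
  have sg': "(\<Sum>i<N. \<Sum>j<N. g' i j) = (\<Sum>i<N. \<Sum>j<N. g i j)"
  proof -
    have "(\<Sum>i<N. \<Sum>j<N. g' i j) = (\<Sum>j<N. \<Sum>i<N. g' i j)" by (rule sum.swap)
    also have "\<dots> = (\<Sum>j<N. \<Sum>i<N. g j i)"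
      by (intro sum.cong refl) (auto simp: g_def g'_def hc)
    finally show ?thesis .
  qed
  have sg: "(\<Sum>j<N. g i j) = (cmod (v $ i))^2 * (\<Sum>j\<in>{..<N}-{i}. cmod (M $$ (i,j)))" if "i < N" for i
  proof -
    have "(\<Sum>j<N. g i j) = (\<Sum>j\<in>{..<N}-{i}. g i j) + g i i"
      using that by (simp add: sum.remove[of "{..<N}" i] add.commute)
    also have "\<dots> = (\<Sum>j\<in>{..<N}-{i}. cmod (M $$ (i,j)) * (cmod (v $ i))^2)"
      by (simp add: g_def)
    finally show ?thesis by (simp add: sum_distrib_left mult.commute)
  qed
  have "(\<Sum>i<N. \<Sum>j<N. f i j) = (\<Sum>i<N. (cmod (v $ i))^2 * Re (M $$ (i,i))) - (\<Sum>i<N. \<Sum>j<N. g i j)"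
  proof -
    have "(\<Sum>i<N. \<Sum>j<N. f i j) = (\<Sum>i<N. \<Sum>j<N. (if i = j then (cmod (v $ i))^2 * Re (M $$ (i,i)) else 0)) - (\<Sum>i<N. \<Sum>j<N. g i j) / 2 - (\<Sum>i<N. \<Sum>j<N. g' i j) / 2"
      by (simp add: fe sum_subtractf sum_divide_distrib)
    also have "(\<Sum>i<N. \<Sum>j<N. (if i = j then (cmod (v $ i))^2 * Re (M $$ (i,i)) else 0)) = (\<Sum>i<N. (cmod (v $ i))^2 * Re (M $$ (i,i)))"
      by (intro sum.cong refl) (simp add: sum_delta_nat)
    finally show ?thesis using sg' by simp
  qed
  also have "\<dots> = (\<Sum>i<N. (cmod (v $ i))^2 * (Re (M $$ (i,i)) - (\<Sum>j\<in>{..<N}-{i}. cmod (M $$ (i,j)))))"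
    by (simp add: sg sum_subtractf right_diff_distrib)
  also have "\<dots> \<ge> 0"
    using dd by (intro sum_nonneg mult_nonneg_nonneg) auto
  finally show "0 \<le> Re z" using 1 by linarith
qed



lemma lim_term:
  fixes k n :: nat and x :: real
  assumes "real k + x \<le> real n"
  shows "((\<lambda>t::real. (t-1)^k * t powr x / t^n) \<longlongrightarrow> (if real k + x = real n then 1 else 0)) at_top"
proof -
  have ev: "\<forall>\<^sub>F t in at_top. (t-1)^k * t powr x / t^n = (1 - inverse t)^k * t powr (real k + x - real n)"
    using eventually_gt_at_top[of "0::real"]
  proof eventually_elim
    case (elim t)
    have "(t-1)^k = t^k * (1 - inverse t)^k"
      using elim by (simp add: power_mult_distrib[symmetric] field_simps)
    moreover have "t^k = t powr real k" "t^n = t powr real n" using elim by (simp_all add: powr_realpow)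
    ultimately have "(t-1)^k * t powr x / t^n = (1 - inverse t)^k * (t powr real k * t powr x / t powr real n)"
      by simp
    also have "t powr real k * t powr x / t powr real n = t powr (real k + x - real n)"
      using elim by (simp add: powr_add powr_diff)
    finally show ?case .
  qed
  have l1: "((\<lambda>t::real. (1 - inverse t)^k) \<longlongrightarrow> 1) at_top"
  proof -
    have "((\<lambda>t::real. 1 - inverse t) \<longlongrightarrow> 1 - 0) at_top"
      by (intro tendsto_intros tendsto_inverse_0_at_top filterlim_ident)
    then have "((\<lambda>t::real. (1 - inverse t)^k) \<longlongrightarrow> (1 - 0)^k) at_top"
      by (rule tendsto_power)
    then show ?thesis by simp
  qed
  have l2: "((\<lambda>t::real. t powr (real k + x - real n)) \<longlongrightarrow> (if real k + x = real n then 1 else 0)) at_top"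
  proof (cases "real k + x = real n")
    case True
    have "\<forall>\<^sub>F t in at_top. 1 = (t::real) powr (real k + x - real n)"
      using eventually_gt_at_top[of "0::real"] by eventually_elim (simp add: True)
    with tendsto_const[of "1::real" at_top] have "((\<lambda>t::real. t powr (real k + x - real n)) \<longlongrightarrow> 1) at_top"
      by (rule Lim_transform_eventually)
    then show ?thesis using True by simp
  next
    case False
    then have "real k + x - real n < 0" using assms by simp
    then have "((\<lambda>t::real. t powr (real k + x - real n)) \<longlongrightarrow> 0) at_top"
      by (intro tendsto_neg_powr filterlim_ident)
    then show ?thesis using False by simp
  qed
  have "((\<lambda>t::real. (1 - inverse t)^k * t powr (real k + x - real n)) \<longlongrightarrow> 1 * (if real k + x = real n then 1 else 0)) at_top"
    by (rule tendsto_mult[OF l1 l2])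
  then show ?thesis using tendsto_cong[OF ev] by simp
qed

lemma term_id:
  assumes t: "t > 0"
  shows "complex_of_real ((t - 1) ^ k / fact k) * (tau t p * c1 * a * c2 * tau t q) / complex_of_real (t^n)
    = complex_of_real ((t-1)^k * t powr ((real p + real q)/2) / t^n) * (complex_of_real (1 / fact k) * c1 * a * c2)"
proof -
  have tt: "tau t p * tau t q = complex_of_real (t powr ((real p + real q)/2))"
    unfolding tau_def by (simp add: powr_add add_divide_distrib del: of_real_mult add: of_real_mult[symmetric])
  have "complex_of_real ((t - 1) ^ k / fact k) * (tau t p * c1 * a * c2 * tau t q) / complex_of_real (t^n)
    = complex_of_real ((t - 1) ^ k / fact k) * (tau t p * tau t q) * (c1 * a * c2) / complex_of_real (t^n)"
    by (simp add: ac_simps)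
  also have "\<dots> = complex_of_real ((t - 1) ^ k / fact k * t powr ((real p + real q)/2) / t^n) * (c1 * a * c2)"
    unfolding tt by (simp add: of_real_mult of_real_divide)
  also have "\<dots> = complex_of_real ((t-1)^k * t powr ((real p + real q)/2) / t^n) * (complex_of_real (1 / fact k) * c1 * a * c2)"
    by (simp add: of_real_mult[symmetric] mult.assoc[symmetric])
  finally show ?thesis .
qed

lemma entry_lim:
  assumes A: "A \<in> carrier_mat (Suc n) (Suc n)" and pq: "p < Suc n" "q < Suc n"
  shows "((\<lambda>t. vertigo n t A $$ (p,q) / complex_of_real (t^n)) \<longlongrightarrow>
           (if p = q then A $$ (n,n) * complex_of_real (real (n choose p)) else 0)) at_top"
proof -
  define C where "C k = complex_of_real (1 / fact k) * cf p k * A $$ (p+k, q+k) * cf q k" for k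
  define cnd where "cnd k = (p + k < Suc n \<and> q + k < Suc n)" for k
  define x where "x = (real p + real q) / 2"
  define h where "h k t = (t-1)^k * t powr x / t^n" for k t
  have ev: "\<forall>\<^sub>F t in at_top. (\<Sum>k\<le>n. if cnd k then complex_of_real (h k t) * C k else 0)
      = vertigo n t A $$ (p,q) / complex_of_real (t^n)"
    using eventually_gt_at_top[of "0::real"]
  proof eventually_elim
    case (elim t)
    show ?case unfolding vertigo_entry[OF A pq] sum_divide_distrib
    proof (intro sum.cong refl)
      fix k
      show "(if cnd k then complex_of_real (h k t) * C k else 0) =
        complex_of_real ((t - 1) ^ k / fact k) * (if p + k < Suc n \<and> q + k < Suc n then tau t p * cf p k * A $$ (p+k, q+k) * cf q k * tau t q else 0) / complex_of_real (t^n)"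
      proof (cases "cnd k")
        case True
        then have "p + k < Suc n \<and> q + k < Suc n" unfolding cnd_def .
        then show ?thesis using True unfolding h_def C_def x_def
          by (simp only: if_True simp_thms term_id[OF elim])
      next
        case False
        then have "\<not> (p + k < Suc n \<and> q + k < Suc n)" unfolding cnd_def .
        then show ?thesis using False by (simp only: if_False simp_thms) simp
      qed
    qed
  qed
  have lk: "((\<lambda>t. if cnd k then complex_of_real (h k t) * C k else 0) \<longlongrightarrow>
      (if cnd k then complex_of_real (if real k + x = real n then 1 else 0) * C k else 0)) at_top" for k
  proof (cases "cnd k")
    case True
    then have "real (p+k) \<le> real n" "real (q+k) \<le> real n" unfolding cnd_def by simp_all
    then have "real k + x \<le> real n" unfolding x_def by (simp add: field_simps)
    from lim_term[OF this] have "((\<lambda>t. h k t) \<longlongrightarrow> (if real k + x = real n then 1 else 0)) at_top"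
      unfolding h_def .
    then have "((\<lambda>t. complex_of_real (h k t) * C k) \<longlongrightarrow> complex_of_real (if real k + x = real n then 1 else 0) * C k) at_top"
      by (intro tendsto_intros)
    then show ?thesis using True by simp
  qed simp
  have "((\<lambda>t. \<Sum>k\<le>n. if cnd k then complex_of_real (h k t) * C k else 0) \<longlongrightarrow>
      (\<Sum>k\<le>n. if cnd k then complex_of_real (if real k + x = real n then 1 else 0) * C k else 0)) at_top"
    by (rule tendsto_sum) (rule lk)
  moreover have "(\<Sum>k\<le>n. if cnd k then complex_of_real (if real k + x = real n then 1 else 0) * C k else 0)
      = (\<Sum>k\<le>n. if p = q then (if k = n - p then C k else 0) else 0)"
  proof (intro sum.cong refl)
    fix k assume "k \<in> {..n}"
    have "(cnd k \<and> real k + x = real n) \<longleftrightarrow> (p = q \<and> k = n - p)"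
    proof
      assume a: "cnd k \<and> real k + x = real n"
      then have "real (p+k) \<le> real n" "real (q+k) \<le> real n" unfolding cnd_def by simp_all
      then have "real (p+k) = real n" "real (q+k) = real n" using a unfolding x_def by (simp add: field_simps)+
      then show "p = q \<and> k = n - p" by simp
    next
      assume "p = q \<and> k = n - p"
      then show "cnd k \<and> real k + x = real n" using pq unfolding cnd_def x_def by auto
    qed
    then show "(if cnd k then complex_of_real (if real k + x = real n then 1 else 0) * C k else 0)
      = (if p = q then (if k = n - p then C k else 0) else 0)" by auto
  qed
  moreover have "(\<Sum>k\<le>n. if p = q then (if k = n - p then C k else 0) else 0)
      = (if p = q then A $$ (n,n) * complex_of_real (real (n choose p)) else 0)"
  proof (cases "p = q")
    case True
    have "(\<Sum>k\<le>n. (if k = n - p then C k else 0)) = C (n - p)" by (simp add: sum.delta)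
    also have "\<dots> = A $$ (n,n) * complex_of_real (real (n choose p))"
    proof -
      have pn: "p + (n - p) = n" using pq by simp
      have "cf p (n-p) * cf p (n-p) = complex_of_real (fact n / fact p)"
        unfolding cf_def pn by (simp del: of_real_mult add: of_real_mult[symmetric])
      moreover have "real (n choose p) = fact n / (fact p * fact (n-p))"
        using pq by (simp add: binomial_fact)
      ultimately have "complex_of_real (1 / fact (n-p)) * (cf p (n-p) * cf p (n-p)) = complex_of_real (real (n choose p))"
        by (simp del: of_real_mult add: of_real_mult[symmetric]) (simp add: mult.commute)
      moreover have "C (n-p) = complex_of_real (1 / fact (n-p)) * (cf p (n-p) * cf p (n-p)) * A $$ (n,n)"
        unfolding C_def True[symmetric] pn by (simp add: ac_simps)
      ultimately show ?thesis by simp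
    qed
    finally show ?thesis using True by simp
  qed simp
  ultimately show ?thesis using tendsto_cong[OF ev] by simp
qed



lemma vn_entry: "p < Suc n \<Longrightarrow> q < Suc n \<Longrightarrow> vertigo_norm n t A $$ (p,q) = vertigo n t A $$ (p,q) / mtrace (vertigo n t A)"
  using carrier_matD[OF vertigo_carrier[of n t A]] by (simp add: vertigo_norm_def)

lemma vn_carrier: "vertigo_norm n t A \<in> carrier_mat (Suc n) (Suc n)"
  using vertigo_carrier[of n t A] by (simp add: vertigo_norm_def)

lemma mtrace_v: "mtrace (vertigo n t A) = (\<Sum>p<Suc n. vertigo n t A $$ (p,p))"
  using carrier_matD[OF vertigo_carrier[of n t A]] by (simp add: mtrace_def)

lemma good_t:
  assumes A: "A \<in> carrier_mat (Suc n) (Suc n)" "adj A = A"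
    and tr: "mtrace (vertigo n t A) \<noteq> 0"
    and B: "B > 0" "\<And>p. p < Suc n \<Longrightarrow> 1 \<le> b p"
    and close: "\<And>p q. p < Suc n \<Longrightarrow> q < Suc n \<Longrightarrow>
        cmod (vertigo_norm n t A $$ (p,q) - (if p = q then complex_of_real (b p / B) else 0)) < 1 / (2 * B * real (Suc n))"
  shows "state_n n (vertigo_norm n t A)"
proof -
  let ?V = "vertigo n t A" and ?W = "vertigo_norm n t A" and ?N = "Suc n"
  define tr where "tr = mtrace ?V"
  define e where "e = 1 / (2 * B * real ?N)"
  have h: "?V $$ (q,p) = cnj (?V $$ (p,q))" if "p < ?N" "q < ?N" for p q
    using vertigo_herm[OF A that] .
  have trr: "cnj tr = tr" unfolding tr_def mtrace_v cnj_sum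
  proof (intro sum.cong refl)
    fix p assume "p \<in> {..<?N}"
    then have "?V $$ (p,p) = cnj (?V $$ (p,p))" using h[of p p] by simp
    then show "cnj (?V $$ (p,p)) = ?V $$ (p,p)" by simp
  qed
  have W: "?W $$ (p,q) = ?V $$ (p,q) / tr" if "p < ?N" "q < ?N" for p q
    using vn_entry[OF that] tr_def by simp
  have hW: "?W $$ (q,p) = cnj (?W $$ (p,q))" if "p < ?N" "q < ?N" for p q
  proof -
    have "?W $$ (q,p) = ?V $$ (q,p) / tr" using W that by simp
    also have "\<dots> = cnj (?V $$ (p,q)) / cnj tr" using h[OF that] trr by simp
    also have "\<dots> = cnj (?W $$ (p,q))" using W that by simp
    finally show ?thesis .
  qed
  have cW: "?W \<in> carrier_mat ?N ?N" by (rule vn_carrier)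
  have adjW: "adj ?W = ?W"
  proof (rule eq_matI)
    show "dim_row (adj ?W) = dim_row ?W" "dim_col (adj ?W) = dim_col ?W" using cW by (auto simp: adj_def)
    fix i j assume "i < dim_row ?W" "j < dim_col ?W"
    then have ij: "i < ?N" "j < ?N" using cW by auto
    have "adj ?W $$ (i,j) = cnj (?W $$ (j,i))" using cW ij by (simp add: adj_def)
    also have "\<dots> = ?W $$ (i,j)" using hW[OF ij] by simp
    finally show "adj ?W $$ (i,j) = ?W $$ (i,j)" .
  qed
  have trW: "mtrace ?W = 1"
  proof -
    have "mtrace ?W = (\<Sum>p<?N. ?V $$ (p,p) / tr)" using cW unfolding mtrace_def
      by (intro sum.cong) (auto simp: W)
    also have "\<dots> = tr / tr" unfolding tr_def mtrace_v sum_divide_distrib ..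
    finally show ?thesis using tr tr_def by simp
  qed
  have epos: "e > 0" unfolding e_def using B by simp
  have dd: "(\<Sum>q\<in>{..<?N}-{p}. cmod (?W $$ (p,q))) \<le> Re (?W $$ (p,p))" if p: "p < ?N" for p
  proof -
    have "(\<Sum>q\<in>{..<?N}-{p}. cmod (?W $$ (p,q))) \<le> (\<Sum>q\<in>{..<?N}-{p}. e)"
    proof (rule sum_mono)
      fix q assume "q \<in> {..<?N}-{p}"
      then have "q < ?N" "p \<noteq> q" by auto
      then show "cmod (?W $$ (p,q)) \<le> e" using close[OF p \<open>q < ?N\<close>] unfolding e_def by simp
    qed
    also have "\<dots> = real n * e" using p by simp
    finally have s1: "(\<Sum>q\<in>{..<?N}-{p}. cmod (?W $$ (p,q))) \<le> real n * e" .
    have c: "cmod (?W $$ (p,p) - complex_of_real (b p / B)) < e" using close[OF p p] unfolding e_def by simp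
    have "Re (?W $$ (p,p)) = b p / B + Re (?W $$ (p,p) - complex_of_real (b p / B))" by simp
    also have "\<dots> \<ge> b p / B - e" using c abs_Re_le_cmod[of "?W $$ (p,p) - complex_of_real (b p / B)"] by linarith
    finally have s2: "b p / B - e \<le> Re (?W $$ (p,p))" .
    have "1 / B \<le> b p / B" using B p by (simp add: divide_right_mono)
    moreover have "real n * e + e = 1 / (2 * B)"
    proof -
      have "real n * e + e = (real n + 1) * e" by (simp add: algebra_simps)
      also have "\<dots> = (real n + 1) / (2 * B * (real n + 1))" unfolding e_def by (simp add: add.commute)
      also have "\<dots> = 1 / (2 * B)"
      proof -
        have x: "real n + 1 \<noteq> 0" by linarith
        have "B * 2 + B * (real n * 2) > 0" using B(1) by (simp add: add_pos_nonneg)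
        then show ?thesis using x B(1) by (simp add: field_simps del: of_nat_Suc)
      qed
      finally show ?thesis .
    qed
    moreover have "1 / (2 * B) \<le> 1 / B" using B by (simp add: field_simps)
    ultimately show ?thesis using s1 s2 by linarith
  qed
  have "psd ?W" by (rule dd_psd[OF cW hW dd])
  then show ?thesis unfolding state_n_def quasi_state_n_def fock_dim_def using cW adjW trW by simp
qed

theorem lemma5:
  fixes n :: nat and A :: "complex mat"
  assumes "quasi_state_n n A"
    and "A $$ (n, n) \<noteq> 0"
  shows "\<exists>t0 > 0. \<forall>t \<ge> t0. mtrace (vertigo n t A) \<noteq> 0 \<and> state_n n (vertigo_norm n t A)"
proof -
  let ?N = "Suc n"
  have A: "A \<in> carrier_mat ?N ?N" "adj A = A" using assms(1) by (auto simp: quasi_state_n_def fock_dim_def)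
  define s where "s = A $$ (n,n)"
  have s0: "s \<noteq> 0" using assms(2) s_def by simp
  define b where "b p = real (n choose p)" for p
  define B where "B = (\<Sum>p<?N. b p)"
  have b1: "1 \<le> b p" if "p < ?N" for p
    using that unfolding b_def by (simp add: Suc_le_eq)
  have Bpos: "B > 0" unfolding B_def
    by (rule sum_pos) (auto simp: b_def)
  define L where "L p q = (if p = q then s * complex_of_real (b p) else 0)" for p q
  define e where "e = 1 / (2 * B * real ?N)"
  have epos: "e > 0" unfolding e_def using Bpos by simp
  define tr where "tr t = mtrace (vertigo n t A)" for t
  have lim: "((\<lambda>t. vertigo n t A $$ (p,q) / complex_of_real (t^n)) \<longlongrightarrow> L p q) at_top"
    if "p < ?N" "q < ?N" for p q
    using entry_lim[OF A(1) that] unfolding L_def b_def s_def .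
  have ltr: "((\<lambda>t. tr t / complex_of_real (t^n)) \<longlongrightarrow> s * complex_of_real B) at_top"
  proof -
    have "((\<lambda>t. \<Sum>p<?N. vertigo n t A $$ (p,p) / complex_of_real (t^n)) \<longlongrightarrow> (\<Sum>p<?N. L p p)) at_top"
      by (intro tendsto_sum lim) auto
    moreover have "(\<Sum>p<?N. L p p) = s * complex_of_real B"
      unfolding L_def B_def of_real_sum sum_distrib_left by simp
    ultimately show ?thesis unfolding tr_def mtrace_v sum_divide_distrib by simp
  qed
  have sB: "s * complex_of_real B \<noteq> 0" using s0 Bpos by simp
  have ev_tr: "\<forall>\<^sub>F t in at_top. tr t / complex_of_real (t^n) \<noteq> 0"
    by (rule tendsto_imp_eventually_ne[OF ltr sB])
  have ev_pq: "\<forall>\<^sub>F t in at_top. cmod (vertigo_norm n t A $$ (p,q) - (if p = q then complex_of_real (b p / B) else 0)) < e"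
    if pq: "p < ?N" "q < ?N" for p q
  proof -
    have l: "((\<lambda>t. (vertigo n t A $$ (p,q) / complex_of_real (t^n)) / (tr t / complex_of_real (t^n)))
        \<longlongrightarrow> L p q / (s * complex_of_real B)) at_top"
      by (rule tendsto_divide[OF lim[OF pq] ltr sB])
    have "L p q / (s * complex_of_real B) = (if p = q then complex_of_real (b p / B) else 0)"
      unfolding L_def using s0 Bpos by simp
    with l have l2: "((\<lambda>t. (vertigo n t A $$ (p,q) / complex_of_real (t^n)) / (tr t / complex_of_real (t^n)))
        \<longlongrightarrow> (if p = q then complex_of_real (b p / B) else 0)) at_top" by simp
    have "\<forall>\<^sub>F t in at_top. dist ((vertigo n t A $$ (p,q) / complex_of_real (t^n)) / (tr t / complex_of_real (t^n)))
        (if p = q then complex_of_real (b p / B) else 0) < e"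
      using tendstoD[OF l2 epos] .
    moreover have "\<forall>\<^sub>F t in at_top. (vertigo n t A $$ (p,q) / complex_of_real (t^n)) / (tr t / complex_of_real (t^n))
        = vertigo_norm n t A $$ (p,q)"
      using eventually_gt_at_top[of "0::real"]
    proof eventually_elim
      case (elim t)
      then have "complex_of_real (t^n) \<noteq> 0" by simp
      then show ?case using vn_entry[OF pq] unfolding tr_def by simp
    qed
    ultimately show ?thesis
      by eventually_elim (simp add: dist_norm)
  qed
  have ev_all: "\<forall>\<^sub>F t in at_top. \<forall>pq\<in>{..<?N} \<times> {..<?N}.
      cmod (vertigo_norm n t A $$ (fst pq, snd pq) - (if fst pq = snd pq then complex_of_real (b (fst pq) / B) else 0)) < e"
  proof (rule eventually_ball_finite)
    show "\<forall>pq\<in>{..<?N} \<times> {..<?N}. \<forall>\<^sub>F t in at_top.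
      cmod (vertigo_norm n t A $$ (fst pq, snd pq) - (if fst pq = snd pq then complex_of_real (b (fst pq) / B) else 0)) < e"
    proof
      fix pq assume "pq \<in> {..<?N} \<times> {..<?N}"
      then have "fst pq < ?N" "snd pq < ?N" by auto
      from ev_pq[OF this] show "\<forall>\<^sub>F t in at_top.
        cmod (vertigo_norm n t A $$ (fst pq, snd pq) - (if fst pq = snd pq then complex_of_real (b (fst pq) / B) else 0)) < e" .
    qed
  qed simp
  have "\<forall>\<^sub>F t in at_top. mtrace (vertigo n t A) \<noteq> 0 \<and> state_n n (vertigo_norm n t A)"
    using ev_all ev_tr
  proof eventually_elim
    case (elim t)
    have tr0: "mtrace (vertigo n t A) \<noteq> 0" using elim(2) unfolding tr_def by auto
    have cl: "cmod (vertigo_norm n t A $$ (p,q) - (if p = q then complex_of_real (b p / B) else 0)) < 1 / (2 * B * real ?N)"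
      if "p < ?N" "q < ?N" for p q
    proof -
      have "(p,q) \<in> {..<?N} \<times> {..<?N}" using that by simp
      from bspec[OF elim(1) this] show ?thesis unfolding e_def fst_conv snd_conv .
    qed
    show ?case using tr0 good_t[OF A tr0 Bpos b1 cl] by blast
  qed
  then obtain T where T: "\<And>t. t \<ge> T \<Longrightarrow> mtrace (vertigo n t A) \<noteq> 0 \<and> state_n n (vertigo_norm n t A)"
    by (auto simp: eventually_at_top_linorder)
  show ?thesis
  proof (rule exI[of _ "max T 1"], rule conjI)
    show "max T 1 > 0" by simp
    show "\<forall>t \<ge> max T 1. mtrace (vertigo n t A) \<noteq> 0 \<and> state_n n (vertigo_norm n t A)"
      using T by simp
  qed
qed

end
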